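(* Let $g\ge2$, $\mathcal F$ a canonical fundamental $(8g-4)$-gon, and $\bar A=\overline{PQ}$, i.e. $A_k=P_k$ for odd $k$ and $A_k=Q_k$ for even $k$. Then the partition of $\mathbb S$ into the $8g-4$ arcs $I_k=[P_k,Q_{k+1}]$ ($k$ odd), $I_k=[Q_k,P_{k+1}]$ ($k$ even) is a Markov partition for $f_{\overline{PQ}}$, and the maximal eigenvalue of the associated $(8g-4)\times(8g-4)$ transition matrix is $4g-3+\sqrt{(4g-3)^2-1}$.
   Context: Setup: canonical $(8g-4)$-gon with counterclockwise-labelled sides, pairing $\sigma(k)=4g-k\bmod(8g-4)$ ($k$ odd), $2-k\bmod(8g-4)$ ($k$ even), generators $T_k$ mapping side $k$ to side $\sigma(k)$, $P_k$ and $Q_{k+1}$ the initial/terminal endpoints of the oriented geodesic extending side $k$, order $P_1,Q_1,\dots,P_{8g-4},Q_{8g-4}$ counterclockwise on $\mathbb S$. $f_{\bar A}(x)=T_kx$ for $x\in[A_k,A_{k+1})$. The transition matrix of a partition $\{I_j\}$ has entry $1$ at $(i,j)$ iff $f_{\bar A}(I_i)\supset I_j$, else $0$. *)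

theory Defs
  imports Complex_Main "Jordan_Normal_Form.Char_Poly"
begin

definition Nside :: "nat \<Rightarrow> nat" where
  "Nside g = 8 * g - 4"

text \<open>Regular polygon centred at 0 with all interior angles pi/2; side k (sides labelled
counterclockwise, indices taken mod Nside g) lies on the geodesic (circle orthogonal to the
unit circle) whose endpoints are at the angles alpha k - beta and alpha k + beta.
Adjacent side-geodesics meet at right angles iff sin beta = sqrt 2 * sin (pi / N).\<close>

definition alpha :: "nat \<Rightarrow> int \<Rightarrow> real" where
  "alpha g k = 2 * pi * real_of_int k / real (Nside g)"

definition beta :: "nat \<Rightarrow> real" where
  "beta g = arcsin (sqrt 2 * sin (pi / real (Nside g)))"

text \<open>P k: initial endpoint of the oriented (counterclockwise along the boundary) geodesic
extending side k; Q (k+1): its terminal endpoint.\<close>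

definition Ppt :: "nat \<Rightarrow> int \<Rightarrow> complex" where
  "Ppt g k = cis (alpha g k - beta g)"

definition Qpt :: "nat \<Rightarrow> int \<Rightarrow> complex" where
  "Qpt g k = cis (alpha g (k - 1) + beta g)"

definition sigma :: "nat \<Rightarrow> int \<Rightarrow> int" where
  "sigma g k = (if odd k then (4 * int g - k) mod int (Nside g)
                else (2 - k) mod int (Nside g))"

text \<open>Hyperbolic Moebius map along the real axis, mapping the side-geodesic in direction pi
onto the one in direction 0 (and 0 to cos beta).\<close>

definition mobH :: "real \<Rightarrow> complex \<Rightarrow> complex" where
  "mobH t z = (z + complex_of_real t) / (1 + complex_of_real t * z)"

text \<open>Generator T k: the orientation preserving isometry of the disk mapping side k onto side
sigma k (with T k (P k) = Q (sigma k + 1), T k (Q (k+1)) = P (sigma k)).\<close>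

definition T :: "nat \<Rightarrow> int \<Rightarrow> complex \<Rightarrow> complex" where
  "T g k z = cis (alpha g (sigma g k)) * mobH (cos (beta g)) (cis (pi - alpha g k) * z)"

definition circle :: "complex set" where
  "circle = {z. cmod z = 1}"

definition ccw_angle :: "complex \<Rightarrow> complex \<Rightarrow> real" where
  "ccw_angle a z = (let t = Arg (z / a) in if t < 0 then t + 2 * pi else t)"

definition arc_cc :: "complex \<Rightarrow> complex \<Rightarrow> complex set" where
  "arc_cc a b = {z. cmod z = 1 \<and> ccw_angle a z \<le> ccw_angle a b}"

definition arc_co :: "complex \<Rightarrow> complex \<Rightarrow> complex set" where
  "arc_co a b = {z. cmod z = 1 \<and> ccw_angle a z < ccw_angle a b}"

definition circ_int :: "complex set \<Rightarrow> complex set" where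
  "circ_int S = {z \<in> S. \<exists>e>0. \<forall>w. cmod w = 1 \<and> cmod (w - z) < e \<longrightarrow> w \<in> S}"

definition cl :: "complex set \<Rightarrow> complex set" where
  "cl S = {z. \<forall>e>0. \<exists>w\<in>S. cmod (w - z) < e}"

definition fbar :: "nat \<Rightarrow> (int \<Rightarrow> complex) \<Rightarrow> complex \<Rightarrow> complex" where
  "fbar g A x = T g (THE k. k \<in> {1..int (Nside g)} \<and> x \<in> arc_co (A k) (A (k + 1))) x"

definition Abar_PQ :: "nat \<Rightarrow> int \<Rightarrow> complex" where
  "Abar_PQ g k = (if odd k then Ppt g k else Qpt g k)"

definition Ipart :: "nat \<Rightarrow> int \<Rightarrow> complex set" where
  "Ipart g k = (if odd k then arc_cc (Ppt g k) (Qpt g (k + 1))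
                else arc_cc (Qpt g k) (Ppt g (k + 1)))"

definition markov_partition ::
  "(complex \<Rightarrow> complex) \<Rightarrow> (int \<Rightarrow> complex set) \<Rightarrow> int set \<Rightarrow> bool" where
  "markov_partition f I K \<longleftrightarrow>
     finite K \<and> (\<Union>k\<in>K. I k) = circle \<and>
     (\<forall>i\<in>K. \<forall>j\<in>K. i \<noteq> j \<longrightarrow> circ_int (I i) \<inter> circ_int (I j) = {}) \<and>
     (\<forall>i\<in>K. I i = cl (circ_int (I i)) \<and>
        inj_on f (circ_int (I i)) \<and> continuous_on (circ_int (I i)) f \<and>
        cl (f ` circ_int (I i)) =
          \<Union>{I j | j. j \<in> K \<and> circ_int (I j) \<subseteq> f ` circ_int (I i)})"

text \<open>Transition matrix of the partition I 1, ..., I n (row/column index i-1 for I i):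
entry 1 iff f(I i) contains I j (taken up to endpoints, i.e. on interiors).\<close>
definition trans_mat :: "(complex \<Rightarrow> complex) \<Rightarrow> (int \<Rightarrow> complex set) \<Rightarrow> nat \<Rightarrow> complex mat" where
  "trans_mat f I n = mat n n (\<lambda>(i, j).
     if circ_int (I (int j + 1)) \<subseteq> f ` circ_int (I (int i + 1)) then 1 else 0)"

end

theory Submission
  imports Defs
begin


lemma cis_eq_iff: "cis a = cis b \<longleftrightarrow> (\<exists>m::int. a = b + 2 * pi * m)"
proof
  assume "cis a = cis b"
  then have "cis (a - b) = 1" by (simp add: cis_divide[symmetric])
  then have "cos (a - b) = 1" by (simp add: complex_eq_iff)
  from cos_one_2pi_int[THEN iffD1, OF this] obtain n :: int where "a - b = of_int n * 2 * pi" by blast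
  then show "\<exists>m::int. a = b + 2 * pi * m" by (intro exI[of _ n]) (simp add: algebra_simps)
next
  assume "\<exists>m::int. a = b + 2 * pi * m"
  then obtain m :: int where "a = b + 2 * pi * m" by blast
  then have "cis a = cis b * cis (2 * pi * m)" by (simp add: cis_mult[symmetric])
  moreover have "cis (2 * pi * of_int m) = 1" by (rule cis_multiple_2pi) simp
  ultimately show "cis a = cis b" by simp
qed

lemma cis_shift: "cis (a + 2 * pi * of_int m) = cis a"
  using cis_eq_iff by blast

lemma Arg_cis_range: "-pi < x \<Longrightarrow> x \<le> pi \<Longrightarrow> Arg (cis x) = x"
  by (rule cis_Arg_unique) auto

lemma ccw_cis: assumes "0 \<le> p" "p < 2 * pi" shows "ccw_angle (cis a) (cis (a + p)) = p"
proof -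
  have q: "cis (a + p) / cis a = cis p" by (simp add: cis_divide)
  show ?thesis
  proof (cases "p \<le> pi")
    case True
    then have "Arg (cis p) = p" using assms by (intro Arg_cis_range) auto
    then show ?thesis using assms by (simp add: ccw_angle_def q)
  next
    case False
    have "cis p = cis (p - 2 * pi)" using cis_shift[of "p - 2*pi" 1] by simp
    moreover have "Arg (cis (p - 2 * pi)) = p - 2 * pi" using assms False by (intro Arg_cis_range) auto
    ultimately show ?thesis using assms False by (simp add: ccw_angle_def q)
  qed
qed

lemma ccw_range: assumes "cmod z = 1"
  shows "0 \<le> ccw_angle (cis a) z \<and> ccw_angle (cis a) z < 2 * pi \<and> z = cis (a + ccw_angle (cis a) z)"
proof -
  define w where "w = z / cis a"
  have wn: "cmod w = 1" using assms by (simp add: w_def norm_divide)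
  then have w0: "w \<noteq> 0" by auto
  have cw: "cis (Arg w) = w" using cis_Arg[OF w0] wn by (simp add: sgn_div_norm)
  have zw: "z = cis a * w" by (simp add: w_def)
  have b: "- pi < Arg w" "Arg w \<le> pi" using Arg_bounded by auto
  show ?thesis
  proof (cases "Arg w < 0")
    case True
    have "ccw_angle (cis a) z = Arg w + 2 * pi" using True by (simp add: ccw_angle_def w_def[symmetric])
    moreover have "cis (a + (Arg w + 2 * pi)) = z"
      using cis_shift[of "a + Arg w" 1] by (simp add: zw cis_mult[symmetric] cw add.assoc)
    ultimately show ?thesis using b True by auto
  next
    case False
    have "ccw_angle (cis a) z = Arg w" using False by (simp add: ccw_angle_def w_def[symmetric])
    moreover have "cis (a + Arg w) = z" by (simp add: zw cis_mult[symmetric] cw)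
    ultimately show ?thesis using b False by auto
  qed
qed

lemma arc_cc_eq: assumes "x \<le> y" "y - x < 2 * pi"
  shows "arc_cc (cis x) (cis y) = cis ` {x..y}"
proof -
  have yy: "ccw_angle (cis x) (cis y) = y - x" using ccw_cis[of "y - x" x] assms by simp
  show ?thesis
  proof (intro equalityI subsetI)
    fix z assume "z \<in> arc_cc (cis x) (cis y)"
    then have z: "cmod z = 1" "ccw_angle (cis x) z \<le> y - x" by (auto simp: arc_cc_def yy)
    then show "z \<in> cis ` {x..y}" using ccw_range[OF z(1), of x]
      by (intro image_eqI[of _ _ "x + ccw_angle (cis x) z"]) auto
  next
    fix z assume "z \<in> cis ` {x..y}"
    then obtain t where t: "z = cis t" "x \<le> t" "t \<le> y" by auto
    have "ccw_angle (cis x) z = t - x" using ccw_cis[of "t - x" x] t assms by simp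
    then show "z \<in> arc_cc (cis x) (cis y)" using t by (simp add: arc_cc_def yy)
  qed
qed

lemma arc_co_eq: assumes "x \<le> y" "y - x < 2 * pi"
  shows "arc_co (cis x) (cis y) = cis ` {x..<y}"
proof -
  have yy: "ccw_angle (cis x) (cis y) = y - x" using ccw_cis[of "y - x" x] assms by simp
  show ?thesis
  proof (intro equalityI subsetI)
    fix z assume "z \<in> arc_co (cis x) (cis y)"
    then have z: "cmod z = 1" "ccw_angle (cis x) z < y - x" by (auto simp: arc_co_def yy)
    then show "z \<in> cis ` {x..<y}" using ccw_range[OF z(1), of x]
      by (intro image_eqI[of _ _ "x + ccw_angle (cis x) z"]) auto
  next
    fix z assume "z \<in> cis ` {x..<y}"
    then obtain t where t: "z = cis t" "x \<le> t" "t < y" by auto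
    have "ccw_angle (cis x) z = t - x" using ccw_cis[of "t - x" x] t assms by simp
    then show "z \<in> arc_co (cis x) (cis y)" using t by (simp add: arc_co_def yy)
  qed
qed

lemma circle_eq: "circle = cis ` {x..x + 2 * pi}"
proof (intro equalityI subsetI)
  fix z assume "z \<in> circle"
  then have z: "cmod z = 1" by (simp add: circle_def)
  show "z \<in> cis ` {x..x + 2 * pi}" using ccw_range[OF z, of x]
    by (intro image_eqI[of _ _ "x + ccw_angle (cis x) z"]) auto
qed (auto simp: circle_def)

lemma cis_cont: "\<forall>e>0. \<exists>d>0. \<forall>s. \<bar>s - t\<bar> < d \<longrightarrow> cmod (cis s - cis t) < e"
proof -
  have "(\<lambda>x. cis x) \<midarrow>t\<rightarrow> cis t" by (intro tendsto_cis tendsto_ident_at)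
  then have "cis \<midarrow>t\<rightarrow> cis t" by simp
  then have L: "\<forall>r>0. \<exists>s>0. \<forall>x. x \<noteq> t \<and> norm (x - t) < s \<longrightarrow> norm (cis x - cis t) < r"
    by (simp add: LIM_eq)
  show ?thesis
  proof (intro allI impI)
    fix e :: real assume "e > 0"
    then obtain d where "d > 0" "\<forall>x. x \<noteq> t \<and> norm (x - t) < d \<longrightarrow> norm (cis x - cis t) < e"
      using L by blast
    then show "\<exists>d>0. \<forall>s. \<bar>s - t\<bar> < d \<longrightarrow> cmod (cis s - cis t) < e"
      using \<open>e > 0\<close> by (intro exI[of _ d]) (metis diff_self norm_zero real_norm_def)
  qed
qed



lemma cis_diff_norm: "cmod (cis a - cis b) = cmod (cis (a - b) - 1)"
proof -
  have "cis b * cis (a - b) = cis a" by (simp add: cis_mult)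
  then have "cis a - cis b = cis b * (cis (a - b) - 1)" by (simp add: algebra_simps)
  then show ?thesis by (simp add: norm_mult)
qed

lemma cis_not_in_cc: assumes "x \<le> y" "y - x < 2 * pi" "0 < s" "y - x + s < 2 * pi"
  shows "cis (x - s) \<notin> cis ` {x..y}" and "cis (y + s) \<notin> cis ` {x..y}"
proof -
  show "cis (x - s) \<notin> cis ` {x..y}"
  proof
    assume "cis (x - s) \<in> cis ` {x..y}"
    then obtain t where t: "x \<le> t" "t \<le> y" "cis (x - s) = cis t" by auto
    then obtain m :: int where m: "x - s = t + 2 * pi * m" using cis_eq_iff by blast
    have "2 * pi * m < 0" using m t assms by linarith
    then have "m < 0" by (simp add: mult_less_0_iff)
    then have "m \<le> -1" by simp
    then have "2 * pi * m \<le> 2 * pi * (-1)" by (intro mult_left_mono) auto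
    then show False using m t assms by linarith
  qed
  show "cis (y + s) \<notin> cis ` {x..y}"
  proof
    assume "cis (y + s) \<in> cis ` {x..y}"
    then obtain t where t: "x \<le> t" "t \<le> y" "cis (y + s) = cis t" by auto
    then obtain m :: int where m: "y + s = t + 2 * pi * m" using cis_eq_iff by blast
    have "2 * pi * m > 0" using m t assms by linarith
    then have "m > 0" by (simp add: zero_less_mult_iff)
    then have "m \<ge> 1" by simp
    then have "2 * pi * m \<ge> 2 * pi * 1" by (intro mult_left_mono) auto
    then show False using m t assms by linarith
  qed
qed

lemma circ_int_cc: assumes "x < y" "y - x < 2 * pi"
  shows "circ_int (cis ` {x..y}) = cis ` {x<..<y}"
proof (intro equalityI subsetI)
  fix z assume z: "z \<in> circ_int (cis ` {x..y})"
  then obtain e where e: "e > 0" "\<forall>w. cmod w = 1 \<and> cmod (w - z) < e \<longrightarrow> w \<in> cis ` {x..y}"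
    and zin: "z \<in> cis ` {x..y}" by (auto simp: circ_int_def)
  then obtain t where t: "x \<le> t" "t \<le> y" "z = cis t" by auto
  have "t \<noteq> x"
  proof
    assume tx: "t = x"
    obtain d where d: "d > 0" "\<forall>s. \<bar>s - x\<bar> < d \<longrightarrow> cmod (cis s - cis x) < e"
      using cis_cont[of x] e by blast
    define s where "s = min (d/2) ((2 * pi - (y - x)) / 2)"
    have "s \<le> (2 * pi - (y - x)) / 2" "s \<le> d/2" unfolding s_def by (rule min.cobounded2, rule min.cobounded1)
    moreover have "0 < s" using d assms by (simp add: s_def)
    ultimately have s: "0 < s" "s < d" "y - x + s < 2 * pi" using d assms by (linarith, linarith, simp add: field_simps)
    have "cmod (cis (x - s) - z) < e" using d s tx t by auto
    then have "cis (x - s) \<in> cis ` {x..y}" using e by simp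
    then show False using cis_not_in_cc(1)[of x y s] assms s by auto
  qed
  moreover have "t \<noteq> y"
  proof
    assume tx: "t = y"
    obtain d where d: "d > 0" "\<forall>s. \<bar>s - y\<bar> < d \<longrightarrow> cmod (cis s - cis y) < e"
      using cis_cont[of y] e by blast
    define s where "s = min (d/2) ((2 * pi - (y - x)) / 2)"
    have "s \<le> (2 * pi - (y - x)) / 2" "s \<le> d/2" unfolding s_def by (rule min.cobounded2, rule min.cobounded1)
    moreover have "0 < s" using d assms by (simp add: s_def)
    ultimately have s: "0 < s" "s < d" "y - x + s < 2 * pi" using d assms by (linarith, linarith, simp add: field_simps)
    have "cmod (cis (y + s) - z) < e" using d s tx t by auto
    then have "cis (y + s) \<in> cis ` {x..y}" using e by simp
    then show False using cis_not_in_cc(2)[of x y s] assms s by auto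
  qed
  ultimately show "z \<in> cis ` {x<..<y}" using t by auto
next
  fix z assume "z \<in> cis ` {x<..<y}"
  then obtain t where t: "x < t" "t < y" "z = cis t" by auto
  define r where "r = min (t - x) (y - t)"
  have r: "0 < r" "r < pi" using t assms by (auto simp: r_def)
  define e where "e = 1 - cos r"
  have "cos r < cos 0" using r by (intro cos_monotone_0_pi) auto
  then have e0: "e > 0" by (simp add: e_def)
  have "\<forall>w. cmod w = 1 \<and> cmod (w - z) < e \<longrightarrow> w \<in> cis ` {x..y}"
  proof (intro allI impI)
    fix w assume w: "cmod w = 1 \<and> cmod (w - z) < e"
    define c where "c = ccw_angle (cis (t - pi)) w"
    have c: "0 \<le> c" "c < 2 * pi" "w = cis (t - pi + c)" using ccw_range[of w "t - pi"] w by (auto simp: c_def)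
    define p where "p = c - pi"
    have p: "-pi \<le> p" "p < pi" "w = cis (t + p)" using c by (auto simp: p_def algebra_simps)
    show "w \<in> cis ` {x..y}"
    proof (rule ccontr)
      assume "w \<notin> cis ` {x..y}"
      then have "t + p \<notin> {x..y}" using p by auto
      then have "\<bar>p\<bar> > r" using r_def by auto
      then have "cos \<bar>p\<bar> \<le> cos r" using p r by (intro cos_monotone_0_pi_le) auto
      then have cp: "cos p \<le> cos r" by simp
      have "cmod (w - z) = cmod (cis p - 1)" using p t cis_diff_norm[of "t + p" t] by simp
      also have "\<dots> \<ge> \<bar>Re (cis p - 1)\<bar>" by (rule abs_Re_le_cmod)
      finally have "cmod (w - z) \<ge> 1 - cos p" by simp
      then show False using cp w by (simp add: e_def)
    qed
  qed
  then show "z \<in> circ_int (cis ` {x..y})" using e0 t by (auto simp: circ_int_def)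
qed

lemma cl_co: assumes "x < y" shows "cl (cis ` {x<..<y}) = cis ` {x..y}"
proof (intro equalityI subsetI)
  fix z assume z: "z \<in> cl (cis ` {x<..<y})"
  have "closed (cis ` {x..y})"
    by (intro compact_imp_closed compact_continuous_image continuous_intros compact_Icc)
  then have op: "open (- (cis ` {x..y}))" by (simp add: closed_open)
  show "z \<in> cis ` {x..y}"
  proof (rule ccontr)
    assume "z \<notin> cis ` {x..y}"
    then have "\<exists>e>0. \<forall>w. dist w z < e \<longrightarrow> w \<in> - (cis ` {x..y})"
      using op unfolding open_dist by (meson ComplI)
    then obtain e where e: "e > 0" "\<forall>w. dist w z < e \<longrightarrow> w \<in> - (cis ` {x..y})" by blast
    obtain w where "w \<in> cis ` {x<..<y}" "cmod (w - z) < e" using z e unfolding cl_def by blast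
    then show False using e by (auto simp: dist_norm)
  qed
next
  fix z assume "z \<in> cis ` {x..y}"
  then obtain t where t: "x \<le> t" "t \<le> y" "z = cis t" by auto
  show "z \<in> cl (cis ` {x<..<y})"
    unfolding cl_def
  proof (intro CollectI allI impI)
    fix e :: real assume "e > 0"
    then obtain d where d: "d > 0" "\<forall>s. \<bar>s - t\<bar> < d \<longrightarrow> cmod (cis s - cis t) < e"
      using cis_cont[of t] by blast
    define m where "m = (x + y) / 2"
    define l where "l = min 1 (d / (2 * (y - x)))"
    have l1: "0 < l" "l \<le> 1" using d assms by (auto simp: l_def)
    have "l \<le> d / (2 * (y - x))" by (simp add: l_def)
    then have "l * (y - x) \<le> d / (2 * (y - x)) * (y - x)" using assms by (intro mult_right_mono) auto
    also have "\<dots> = d / 2" using assms by (simp add: field_simps)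
    finally have l: "0 < l" "l \<le> 1" "l * (y - x) < d" using l1 d by auto
    define s where "s = t + l * (m - t)"
    have "x < s \<and> s < y"
    proof -
      have "x < m" "m < y" using assms by (auto simp: m_def)
      moreover have "(1-l)*x \<le> (1-l)*t" "(1-l)*t \<le> (1-l)*y" using t l by (auto intro: mult_left_mono)
      moreover have "l*x < l*m" "l*m < l*y" using \<open>x < m\<close> \<open>m < y\<close> l by auto
      moreover have "s = (1-l)*t + l*m" by (simp add: s_def algebra_simps)
      ultimately show ?thesis by (simp add: algebra_simps)
    qed
    moreover have "\<bar>s - t\<bar> < d"
    proof -
      have "\<bar>m - t\<bar> \<le> y - x" using t assms unfolding m_def abs_le_iff by (auto simp: field_simps)
      then have "\<bar>s - t\<bar> \<le> l * (y - x)" using l by (simp add: s_def abs_mult mult_left_mono)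
      then show ?thesis using l by linarith
    qed
    ultimately show "\<exists>w\<in>cis ` {x<..<y}. cmod (w - z) < e" using d t by auto
  qed
qed



lemma N_ge: "g \<ge> 2 \<Longrightarrow> Nside g \<ge> 12" by (simp add: Nside_def)
lemma N_even: "even (Nside g)" by (simp add: Nside_def)
lemma N_evenI: "even (int (Nside g))" by (simp add: Nside_def)

lemma alpha_add: assumes "g \<ge> 2"
  shows "alpha g (k + j) = alpha g k + 2 * pi * of_int j / real (Nside g)"
  by (simp add: alpha_def add_divide_distrib distrib_left)

lemma alpha_shift: assumes "g \<ge> 2"
  shows "alpha g (k + m * int (Nside g)) = alpha g k + 2 * pi * of_int m"
proof -
  have N: "real (Nside g) > 0" using N_ge[OF assms] by simp
  show ?thesis using alpha_add[OF assms, of k "m * int (Nside g)"] N by simp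
qed

definition dl :: "nat \<Rightarrow> real" where "dl g = 2 * pi / real (Nside g)"

lemma beta_facts: assumes "g \<ge> 2"
  shows "0 < beta g" "beta g < dl g" "dl g \<le> pi / 6"
    "sin (beta g) = sqrt 2 * sin (pi / real (Nside g))"
proof -
  define N where "N = real (Nside g)"
  have N12: "N \<ge> 12" using N_ge[OF assms] by (simp add: N_def)
  define y where "y = pi / N"
  have y0: "0 < y" using N12 by (simp add: y_def)
  have y12: "y \<le> pi / 12" unfolding y_def by (rule divide_left_mono) (use N12 in auto)
  have sy: "0 < sin y" using y0 y12 by (intro sin_gt_zero) (auto simp: pi_ge_two)
  have sy2: "sin y \<le> y" using y0 by (intro sin_x_le_x) auto
  define v where "v = sqrt 2 * sin y"
  have v0: "0 < v" using sy by (simp add: v_def)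
  have "v \<le> 2 * y" using sy2 sqrt2_less_2 sy unfolding v_def
    by (intro mult_mono) auto
  also have "2 * y \<le> 2 * (pi / 12)" using y12 by simp
  also have "\<dots> < 1" using pi_less_4 by simp
  finally have v1: "v < 1" .
  have b: "beta g = arcsin v" by (simp add: beta_def v_def y_def N_def)
  show "0 < beta g" unfolding b using arcsin_less_arcsin[of 0 v] v0 v1 by simp
  show "sin (beta g) = sqrt 2 * sin (pi / real (Nside g))" unfolding b
    using v0 v1 by (simp add: v_def y_def N_def)
  have "cos (pi / 4) < cos y" using y0 y12 by (intro cos_monotone_0_pi) auto
  then have cy: "sqrt 2 / 2 < cos y" by (simp add: cos_45)
  have "sqrt 2 * sin y < (2 * cos y) * sin y" using cy sy by (intro mult_strict_right_mono) auto
  then have "v < sin (2 * y)" unfolding v_def sin_double by (simp add: algebra_simps)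
  then have "arcsin v < arcsin (sin (2 * y))"
    using v0 by (intro arcsin_less_arcsin) auto
  also have "arcsin (sin (2 * y)) = 2 * y" using y0 y12 by (intro arcsin_sin) auto
  finally show "beta g < dl g" unfolding b dl_def y_def N_def by simp
  have "2 * pi / N \<le> 2 * pi / 12" by (rule divide_left_mono) (use N12 in auto)
  then show "dl g \<le> pi / 6" unfolding dl_def N_def by simp
qed

definition ee :: "nat \<Rightarrow> int \<Rightarrow> real" where
  "ee g k = (if odd k then alpha g k - beta g else alpha g (k - 1) + beta g)"

lemma ee_shift: assumes "g \<ge> 2" shows "ee g (k + m * int (Nside g)) = ee g k + 2 * pi * of_int m"
proof -
  have "odd (k + m * int (Nside g)) \<longleftrightarrow> odd k" using N_evenI by auto
  moreover have "alpha g (k + m * int (Nside g) - 1) = alpha g (k - 1) + 2 * pi * of_int m"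
    using alpha_shift[OF assms, of "k - 1" m] by (simp add: algebra_simps)
  ultimately show ?thesis by (simp add: ee_def alpha_shift[OF assms])
qed

lemma alpha_succ: assumes "g \<ge> 2" shows "alpha g (k + 1) = alpha g k + dl g"
  using alpha_add[OF assms, of k 1] by (simp add: dl_def)

lemma alpha_pred: assumes "g \<ge> 2" shows "alpha g (k - 1) = alpha g k - dl g"
  using alpha_succ[OF assms, of "k - 1"] by simp

lemma ee_step: assumes "g \<ge> 2"
  shows "ee g (k + 1) - ee g k = (if odd k then 2 * beta g else 2 * dl g - 2 * beta g)"
  using alpha_succ[OF assms, of k] alpha_pred[OF assms, of k] by (auto simp: ee_def)

lemma ee_lt: assumes "g \<ge> 2" shows "ee g k < ee g (k + 1)" "ee g (k + 1) - ee g k < 2 * pi"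
  using ee_step[OF assms, of k] beta_facts[OF assms] pi_gt_zero by (auto split: if_splits)

lemma ee_mono: assumes "g \<ge> 2" "i < j" shows "ee g i < ee g j"
  using assms(2)
proof (induction j rule: int_gr_induct)
  case base then show ?case using ee_lt[OF assms(1)] by simp
next
  case (step j) then show ?case using ee_lt(1)[OF assms(1), of j] by linarith
qed

lemma ee_mono_le: assumes "g \<ge> 2" "i \<le> j" shows "ee g i \<le> ee g j"
  using ee_mono[OF assms(1), of i j] assms(2) by (cases "i = j") auto

lemma ee_mono_iff: assumes "g \<ge> 2" shows "ee g i < ee g j \<longleftrightarrow> i < j"
  using ee_mono[OF assms] ee_mono_le[OF assms] by (meson linorder_not_le)

lemma Abar_ee: "Abar_PQ g k = cis (ee g k)"
  by (simp add: Abar_PQ_def ee_def Ppt_def Qpt_def)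

lemma Ipart_ee: assumes "g \<ge> 2" shows "Ipart g k = cis ` {ee g k .. ee g (k + 1)}"
proof -
  have "Ipart g k = arc_cc (cis (ee g k)) (cis (ee g (k + 1)))"
    by (simp add: Ipart_def ee_def Ppt_def Qpt_def)
  also have "\<dots> = cis ` {ee g k .. ee g (k + 1)}"
    using ee_lt[OF assms, of k] by (intro arc_cc_eq) auto
  finally show ?thesis .
qed

lemma arcco_ee: assumes "g \<ge> 2"
  shows "arc_co (Abar_PQ g k) (Abar_PQ g (k + 1)) = cis ` {ee g k ..< ee g (k + 1)}"
  unfolding Abar_ee using ee_lt[OF assms, of k] by (intro arc_co_eq) auto

lemma int_Ipart: assumes "g \<ge> 2" shows "circ_int (Ipart g k) = cis ` {ee g k <..< ee g (k + 1)}"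
  unfolding Ipart_ee[OF assms] using ee_lt[OF assms, of k] by (intro circ_int_cc) auto

lemma cl_int_Ipart: assumes "g \<ge> 2" shows "cl (circ_int (Ipart g k)) = Ipart g k"
proof -
  have "cl (circ_int (Ipart g k)) = cl (cis ` {ee g k <..< ee g (k + 1)})" by (simp only: int_Ipart[OF assms])
  also have "\<dots> = cis ` {ee g k .. ee g (k + 1)}" using ee_lt[OF assms, of k] by (intro cl_co) auto
  finally show ?thesis by (simp only: Ipart_ee[OF assms])
qed



definition hh :: "real \<Rightarrow> real \<Rightarrow> real" where "hh K u = 2 * arctan (K * tan (u / 2))"
definition hinv :: "real \<Rightarrow> real \<Rightarrow> real" where "hinv K v = 2 * arctan (tan (v / 2) / K)"

lemma hh_bounds: "-pi < hh K u \<and> hh K u < pi"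
  using arctan_bounded[of "K * tan (u / 2)"] by (simp add: hh_def)

lemma hinv_bounds: "-pi < hinv K u \<and> hinv K u < pi"
  using arctan_bounded[of "tan (u / 2) / K"] by (simp add: hinv_def)

lemma hh_mono: assumes "K > 0" "-pi < u" "u < u'" "u' < pi" shows "hh K u < hh K u'"
proof -
  have "tan (u/2) < tan (u'/2)" using assms by (intro tan_monotone) auto
  then have "K * tan (u/2) < K * tan (u'/2)" using assms by simp
  then show ?thesis by (simp add: hh_def arctan_less_iff)
qed

lemma hh_hinv: assumes "K > 0" "-pi < v" "v < pi" shows "hh K (hinv K v) = v"
proof -
  have "hh K (hinv K v) = 2 * arctan (tan (v / 2))" using assms by (simp add: hh_def hinv_def tan_arctan)
  also have "\<dots> = v" using assms by (subst arctan_tan) auto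
  finally show ?thesis .
qed

lemma hh_odd: "hh K (- u) = - hh K u"
  by (simp add: hh_def arctan_minus)

lemma hh_image: assumes "K > 0" "-pi < a - d" "a < b" "b - d < pi"
  shows "(\<lambda>x. c + hh K (x - d)) ` {a<..<b} = {c + hh K (a - d) <..< c + hh K (b - d)}"
proof (intro equalityI subsetI)
  fix y assume "y \<in> (\<lambda>x. c + hh K (x - d)) ` {a<..<b}"
  then obtain x where x: "a < x" "x < b" "y = c + hh K (x - d)" by auto
  have "hh K (a - d) < hh K (x - d)" "hh K (x - d) < hh K (b - d)"
    using x assms by (intro hh_mono; simp)+
  then show "y \<in> {c + hh K (a - d) <..< c + hh K (b - d)}" using x by auto
next
  fix y assume y: "y \<in> {c + hh K (a - d) <..< c + hh K (b - d)}"
  define w where "w = y - c"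
  have w: "hh K (a - d) < w" "w < hh K (b - d)" using y by (auto simp: w_def)
  have wb: "-pi < w" "w < pi" using w hh_bounds[of K "a - d"] hh_bounds[of K "b - d"] by linarith+
  define x where "x = d + hinv K w"
  have hx: "hh K (x - d) = w" using hh_hinv[OF assms(1) wb] by (simp add: x_def)
  have xb: "-pi < x - d" "x - d < pi" using hinv_bounds[of K w] by (auto simp: x_def)
  have "a < x"
  proof (rule ccontr)
    assume "\<not> a < x"
    then have "hh K (x - d) \<le> hh K (a - d)"
      using hh_mono[OF assms(1), of "x - d" "a - d"] xb assms by (cases "x = a") auto
    then show False using hx w by simp
  qed
  moreover have "x < b"
  proof (rule ccontr)
    assume "\<not> x < b"
    then have "hh K (b - d) \<le> hh K (x - d)"
      using hh_mono[OF assms(1), of "b - d" "x - d"] xb assms by (cases "x = b") auto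
    then show False using hx w by simp
  qed
  ultimately show "y \<in> (\<lambda>x. c + hh K (x - d)) ` {a<..<b}" using hx by (intro image_eqI[of _ _ x]) (auto simp: w_def)
qed

lemma cis_tan: assumes "cos x \<noteq> 0" shows "cis (2 * x) = (1 + \<i> * tan x) / (1 - \<i> * tan x)"
proof -
  have d: "1 - \<i> * tan x \<noteq> 0" by (simp add: complex_eq_iff)
  have "cis x = complex_of_real (cos x) * (1 + \<i> * tan x)" "cis (-x) = complex_of_real (cos x) * (1 - \<i> * tan x)"
    using assms by (simp_all add: complex_eq_iff tan_def)
  then have "cis (2 * x) = (complex_of_real (cos x) * (1 + \<i> * tan x)) / (complex_of_real (cos x) * (1 - \<i> * tan x))"
    by (metis cis_divide diff_minus_eq_add mult_2)
  then show ?thesis using assms by simp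
qed

lemma mobH_cis: assumes "0 < t" "t < 1" "-pi < u" "u < pi"
  shows "mobH t (cis (pi + u)) = cis (pi + hh ((1 + t) / (1 - t)) u)"
proof -
  define K where "K = (1 + t) / (1 - t)"
  define s where "s = tan (u / 2)"
  define z where "z = cis u"
  have c1: "cos (u / 2) \<noteq> 0" using assms by (intro order.strict_implies_not_eq[symmetric] cos_gt_zero_pi) auto
  have d1: "1 - \<i> * s \<noteq> 0" by (simp add: complex_eq_iff)
  have cu: "z * (1 - \<i> * s) = 1 + \<i> * s" using cis_tan[OF c1] d1 by (simp add: s_def z_def field_simps)
  have ch: "cis (hh K u) = (1 + \<i> * (K * s)) / (1 - \<i> * (K * s))"
    using cis_tan[of "arctan (K * s)"] by (simp add: hh_def s_def tan_arctan)
  have d2: "1 - \<i> * (K * s) \<noteq> 0" by (simp add: complex_eq_iff)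
  have d3: "1 - complex_of_real t * z \<noteq> 0"
  proof
    assume "1 - complex_of_real t * z = 0"
    then have "cmod (complex_of_real t * z) = 1" by (metis eq_iff_diff_eq_0 norm_one)
    then show False using assms by (simp add: z_def norm_mult)
  qed
  have K: "complex_of_real K * (1 - complex_of_real t) = 1 + complex_of_real t"
  proof -
    have "K * (1 - t) = 1 + t" using assms by (simp add: K_def)
    then show ?thesis by (metis of_real_1 of_real_add of_real_diff of_real_mult)
  qed
  have key: "(- z + t) * (1 - \<i> * (K * s)) + (1 + \<i> * (K * s)) * (1 - t * z)
      = (1 + t) * ((1 + \<i> * s) - z * (1 - \<i> * s))"
  proof -
    have "\<forall>(z::complex) t K s. (- z + t) * (1 - \<i> * (K * s)) + (1 + \<i> * (K * s)) * (1 - t * z) - (1 + t) * ((1 + \<i> * s) - z * (1 - \<i> * s))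
     = \<i> * s * (1 + z) * (K * (1 - t) - (1 + t))" by (simp add: algebra_simps)
    then show ?thesis using K unfolding of_real_mult of_real_add of_real_1 by (metis diff_self eq_iff_diff_eq_0 mult_zero_right)
  qed
  then have key2: "(- z + t) * (1 - \<i> * (K * s)) = - ((1 + \<i> * (K * s)) * (1 - t * z))"
    using cu by (simp add: eq_neg_iff_add_eq_0)
  have "mobH t (cis (pi + u)) = (- z + t) / (1 - t * z)"
    by (simp add: mobH_def z_def cis_mult[symmetric])
  also have "\<dots> = - ((1 + \<i> * (K * s)) / (1 - \<i> * (K * s)))"
    using d2 d3 key2 by (simp add: divide_eq_eq field_simps)
  also have "\<dots> = cis (pi + hh K u)" by (simp add: ch cis_mult[symmetric]) (simp add: minus_divide_left)
  finally show ?thesis by (simp add: K_def)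
qed



definition tt :: "nat \<Rightarrow> real" where "tt g = cos (beta g)"
definition KK :: "nat \<Rightarrow> real" where "KK g = (1 + tt g) / (1 - tt g)"

lemma tt_bounds: assumes "g \<ge> 2" shows "0 < tt g" "tt g < 1"
proof -
  note b = beta_facts[OF assms]
  have bp: "beta g < pi / 6" using b by linarith
  show "0 < tt g" unfolding tt_def using b bp by (intro cos_gt_zero_pi) auto
  have "cos (beta g) < cos 0" using b bp by (intro cos_monotone_0_pi) auto
  then show "tt g < 1" by (simp add: tt_def)
qed

lemma KK_pos: assumes "g \<ge> 2" shows "KK g > 0"
  using tt_bounds[OF assms] by (simp add: KK_def)

lemma KK_eq: assumes "g \<ge> 2"
  shows "KK g = (cos (beta g / 2))\<^sup>2 / (sin (beta g / 2))\<^sup>2"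
proof -
  define x where "x = beta g / 2"
  have bx: "beta g = 2 * x" by (simp add: x_def)
  have "1 + tt g = 2 * (cos x)\<^sup>2" unfolding tt_def bx cos_double_cos by simp
  moreover have "1 - tt g = 2 * (sin x)\<^sup>2" unfolding tt_def bx cos_double_sin by simp
  ultimately show ?thesis by (simp add: KK_def x_def)
qed

lemma hh_beta: assumes "g \<ge> 2" shows "hh (KK g) (beta g) = pi - beta g"
proof -
  note b = beta_facts[OF assms]
  define x where "x = beta g / 2"
  have x: "0 < x" "x < pi / 12" using b pi_gt_zero unfolding x_def by linarith+
  have sx: "sin x > 0" using x by (intro sin_gt_zero) auto
  have cx: "cos x > 0" using x by (intro cos_gt_zero_pi) auto
  have "KK g * tan x = cos x / sin x"
    unfolding KK_eq[OF assms] x_def[symmetric] tan_def using sx cx by (simp add: power2_eq_square)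
  also have "\<dots> = tan (pi / 2 - x)" by (simp add: tan_def sin_diff cos_diff)
  finally have "hh (KK g) (beta g) = 2 * arctan (tan (pi / 2 - x))" by (simp add: hh_def x_def)
  also have "\<dots> = 2 * (pi / 2 - x)" using x by (subst arctan_tan) auto
  finally show ?thesis by (simp add: x_def)
qed

lemma polyid: fixes c s C S :: real
  shows "c\<^sup>2 * ((S * c - C * s) * (S * c + C * s)) - s\<^sup>2 * ((C * c + S * s) * (C * c - S * s))
     = S\<^sup>2 * (c\<^sup>2 + s\<^sup>2)\<^sup>2 - 2 * s\<^sup>2 * c\<^sup>2 * (S\<^sup>2 + C\<^sup>2)"
  by (simp add: algebra_simps power2_eq_square)

lemma hh_dl: assumes "g \<ge> 2" shows "hh (KK g) (dl g - beta g) = pi - dl g - beta g"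
proof -
  note b = beta_facts[OF assms]
  define x where "x = beta g / 2"
  define y where "y = dl g / 2"
  have x: "0 < x" "x < y" "y \<le> pi / 12" using b pi_gt_zero unfolding x_def y_def by linarith+
  have sx: "sin x > 0" using x by (intro sin_gt_zero) auto
  have cx: "cos x > 0" using x by (intro cos_gt_zero_pi) auto
  have sy: "sin y = sin (pi / real (Nside g))" by (simp add: y_def dl_def)
  have key0: "(sin y)\<^sup>2 = 2 * (sin x)\<^sup>2 * (cos x)\<^sup>2"
  proof -
    have "sin (beta g) = 2 * sin x * cos x" using sin_double[of x] by (simp add: x_def)
    then have "2 * sin x * cos x = sqrt 2 * sin y" using b(4) sy by simp
    then have "(2 * sin x * cos x)\<^sup>2 = (sqrt 2 * sin y)\<^sup>2" by simp
    then show ?thesis by (simp add: power_mult_distrib) (simp add: algebra_simps)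
  qed
  have c1: "cos (y - x) > 0" using x by (intro cos_gt_zero_pi) auto
  have s1: "sin (y + x) > 0" using x by (intro sin_gt_zero) auto
  have pid: "(sin x)\<^sup>2 + (cos x)\<^sup>2 = 1" "(sin y)\<^sup>2 + (cos y)\<^sup>2 = 1" by simp_all
  have poly: "(cos x)\<^sup>2 * ((sin y * cos x - cos y * sin x) * (sin y * cos x + cos y * sin x))
       = (sin x)\<^sup>2 * ((cos y * cos x + sin y * sin x) * (cos y * cos x - sin y * sin x))"
  proof -
    have "(cos x)\<^sup>2 * ((sin y * cos x - cos y * sin x) * (sin y * cos x + cos y * sin x))
       - (sin x)\<^sup>2 * ((cos y * cos x + sin y * sin x) * (cos y * cos x - sin y * sin x))
       = (sin y)\<^sup>2 * ((cos x)\<^sup>2 + (sin x)\<^sup>2)\<^sup>2 - 2 * (sin x)\<^sup>2 * (cos x)\<^sup>2 * ((sin y)\<^sup>2 + (cos y)\<^sup>2)"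
      by (rule polyid)
    also have "\<dots> = 0"
    proof -
      have p2: "(cos x)\<^sup>2 + (sin x)\<^sup>2 = 1" by simp
      show ?thesis unfolding p2 pid(2) by (simp add: key0)
    qed
    finally show ?thesis by simp
  qed
  have "KK g * tan (y - x) = cos (y + x) / sin (y + x)"
  proof -
    have "KK g * tan (y - x) = (cos x)\<^sup>2 * sin (y - x) / ((sin x)\<^sup>2 * cos (y - x))"
      unfolding KK_eq[OF assms] x_def[symmetric] tan_def by simp
    also have "\<dots> = cos (y + x) / sin (y + x)"
    proof -
      have m: "((cos x)\<^sup>2 * sin (y - x)) * sin (y + x) = cos (y + x) * ((sin x)\<^sup>2 * cos (y - x))"
        using poly by (simp only: sin_diff sin_add cos_diff cos_add mult.assoc mult.commute mult.left_commute)
      have "(sin x)\<^sup>2 * cos (y - x) \<noteq> 0" "sin (y + x) \<noteq> 0" using sx c1 s1 by auto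
      then show ?thesis using m by (simp add: frac_eq_eq)
    qed
    finally show ?thesis .
  qed
  also have "\<dots> = tan (pi / 2 - (y + x))" by (simp add: tan_def sin_diff cos_diff)
  finally have "hh (KK g) (dl g - beta g) = 2 * arctan (tan (pi / 2 - (y + x)))"
    by (simp add: hh_def x_def y_def diff_divide_distrib)
  also have "\<dots> = 2 * (pi / 2 - (y + x))" using x by (subst arctan_tan) auto
  finally show ?thesis by (simp add: x_def y_def)
qed

lemma T_cis: assumes "g \<ge> 2" "-pi < \<theta> - alpha g k" "\<theta> - alpha g k < pi"
  shows "T g k (cis \<theta>) = cis (alpha g (sigma g k) + pi + hh (KK g) (\<theta> - alpha g k))"
proof -
  have "cis (pi - alpha g k) * cis \<theta> = cis (pi - alpha g k + \<theta>)" by (simp add: cis_mult)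
  also have "\<dots> = cis (pi + (\<theta> - alpha g k))" by (rule arg_cong[where f=cis]) simp
  finally have "cis (pi - alpha g k) * cis \<theta> = cis (pi + (\<theta> - alpha g k))" .
  then have "T g k (cis \<theta>) = cis (alpha g (sigma g k)) * cis (pi + hh (KK g) (\<theta> - alpha g k))"
    unfolding T_def using mobH_cis[of "tt g" "\<theta> - alpha g k"] tt_bounds[OF assms(1)] assms
    by (simp add: KK_def tt_def)
  then show ?thesis by (simp add: cis_mult add.assoc)
qed

lemma odd_mod_even: fixes x n :: int assumes "even n" shows "odd (x mod n) \<longleftrightarrow> odd x"
  using assms by (metis even_iff_mod_2_eq_zero mod_mod_cancel)



lemma cis_shift_oo: "cis ` {a + 2*pi*of_int m <..< b + 2*pi*of_int m} = cis ` {a<..<b}"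
proof (intro equalityI subsetI)
  fix z assume "z \<in> cis ` {a + 2*pi*of_int m <..< b + 2*pi*of_int m}"
  then obtain t where t: "a + 2*pi*of_int m < t" "t < b + 2*pi*of_int m" "z = cis t" by auto
  then have "z = cis (t - 2*pi*of_int m)" using cis_shift[of "t - 2*pi*of_int m" m] by simp
  then show "z \<in> cis ` {a<..<b}" using t by auto
next
  fix z assume "z \<in> cis ` {a<..<b}"
  then obtain t where t: "a < t" "t < b" "z = cis t" by auto
  then have "z = cis (t + 2*pi*of_int m)" using cis_shift[of t m] by simp
  then show "z \<in> cis ` {a + 2*pi*of_int m <..< b + 2*pi*of_int m}" using t by auto
qed

lemma cis_shift_cc: "cis ` {a + 2*pi*of_int m .. b + 2*pi*of_int m} = cis ` {a..b}"
proof (intro equalityI subsetI)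
  fix z assume "z \<in> cis ` {a + 2*pi*of_int m .. b + 2*pi*of_int m}"
  then obtain t where t: "a + 2*pi*of_int m \<le> t" "t \<le> b + 2*pi*of_int m" "z = cis t" by auto
  then have "z = cis (t - 2*pi*of_int m)" using cis_shift[of "t - 2*pi*of_int m" m] by simp
  then show "z \<in> cis ` {a..b}" using t by auto
next
  fix z assume "z \<in> cis ` {a..b}"
  then obtain t where t: "a \<le> t" "t \<le> b" "z = cis t" by auto
  then have "z = cis (t + 2*pi*of_int m)" using cis_shift[of t m] by simp
  then show "z \<in> cis ` {a + 2*pi*of_int m .. b + 2*pi*of_int m}" using t by auto
qed

lemma ee_shift1: assumes "g \<ge> 2" shows "ee g (j + m * int (Nside g) + 1) = ee g (j + 1) + 2 * pi * of_int m"
  using ee_shift[OF assms, of "j + 1" m] by (simp add: algebra_simps)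

lemma ee_oo_shift: assumes "g \<ge> 2"
  shows "cis ` {ee g (j + m * int (Nside g)) <..< ee g (j + m * int (Nside g) + 1)} = cis ` {ee g j <..< ee g (j + 1)}"
  unfolding ee_shift1[OF assms] ee_shift[OF assms] by (rule cis_shift_oo)

lemma ee_cc_shift: assumes "g \<ge> 2"
  shows "cis ` {ee g (j + m * int (Nside g)) .. ee g (j + m * int (Nside g) + 1)} = cis ` {ee g j .. ee g (j + 1)}"
  unfolding ee_shift1[OF assms] ee_shift[OF assms] by (rule cis_shift_cc)

lemma normalize_idx: assumes "(n::int) > 0" shows "\<exists>j m. 1 \<le> j \<and> j \<le> n \<and> j' = j + m * n"
proof -
  have "j' = ((j' - 1) mod n + 1) + ((j' - 1) div n) * n" by (simp add: mult.commute)
  moreover have "1 \<le> (j' - 1) mod n + 1" using assms by auto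
  moreover have "(j' - 1) mod n + 1 \<le> n" using pos_mod_bound[OF assms, of "j' - 1"] by linarith
  ultimately show ?thesis by blast
qed

lemma idx_unique: assumes "(n::int) > 0" "1 \<le> i" "i \<le> n" "1 \<le> k" "k \<le> n" "i = k + m * n"
  shows "m = 0"
proof (rule ccontr)
  assume "m \<noteq> 0"
  then have "m \<ge> 1 \<or> m \<le> -1" by auto
  then show False
  proof
    assume "m \<ge> 1" then have "m * n \<ge> 1 * n" using assms by (intro mult_right_mono) auto
    then show False using assms by linarith
  next
    assume "m \<le> -1" then have "m * n \<le> (-1) * n" using assms by (intro mult_right_mono) auto
    then show False using assms by linarith
  qed
qed

lemma ee_overlap: assumes "g \<ge> 2" "ee g i < a" "a < ee g (i + 1)" "ee g k \<le> a" "a < ee g (k + 1)"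
  shows "i = k"
proof -
  have "ee g k < ee g (i + 1)" "ee g i < ee g (k + 1)" using assms by linarith+
  then have "k < i + 1" "i < k + 1" using ee_mono_iff[OF assms(1)] by blast+
  then show ?thesis by linarith
qed

lemma ee_cis_overlap: assumes "g \<ge> 2" "ee g i < a" "a < ee g (i + 1)" "ee g k \<le> b" "b < ee g (k + 1)"
  "cis a = cis b" shows "\<exists>m. i = k + m * int (Nside g)"
proof -
  obtain m :: int where m: "a = b + 2 * pi * m" using assms(6) cis_eq_iff by blast
  have "ee g (k + m * int (Nside g)) \<le> a" "a < ee g (k + m * int (Nside g) + 1)"
    using assms m ee_shift[OF assms(1), of k m] ee_shift1[OF assms(1), of k m] by auto
  then have "i = k + m * int (Nside g)" using ee_overlap[OF assms(1-3)] by blast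
  then show ?thesis by blast
qed

lemma ee_contain: assumes "g \<ge> 2"
  shows "cis ` {ee g j <..< ee g (j + 1)} \<subseteq> cis ` {ee g p <..< ee g q} \<longleftrightarrow>
         (\<exists>m. p \<le> j + m * int (Nside g) \<and> j + m * int (Nside g) < q)"
proof
  assume sub: "cis ` {ee g j <..< ee g (j + 1)} \<subseteq> cis ` {ee g p <..< ee g q}"
  define a where "a = (ee g j + ee g (j + 1)) / 2"
  have a: "ee g j < a" "a < ee g (j + 1)" using ee_lt[OF assms, of j] by (auto simp: a_def)
  then have "cis a \<in> cis ` {ee g p <..< ee g q}" using sub by auto
  then obtain b where b: "ee g p < b" "b < ee g q" "cis a = cis b" by auto
  obtain m :: int where m: "b = a + 2 * pi * m" using b(3) cis_eq_iff by metis
  have bj: "ee g (j + m * int (Nside g)) < b" "b < ee g (j + m * int (Nside g) + 1)"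
    using a m ee_shift[OF assms, of j m] ee_shift1[OF assms, of j m] by auto
  have "ee g p < ee g (j + m * int (Nside g) + 1)" "ee g (j + m * int (Nside g)) < ee g q"
    using b bj by linarith+
  then have "p < j + m * int (Nside g) + 1" "j + m * int (Nside g) < q"
    using ee_mono_iff[OF assms] by blast+
  then show "\<exists>m. p \<le> j + m * int (Nside g) \<and> j + m * int (Nside g) < q" by auto
next
  assume "\<exists>m. p \<le> j + m * int (Nside g) \<and> j + m * int (Nside g) < q"
  then obtain m where m: "p \<le> j + m * int (Nside g)" "j + m * int (Nside g) < q" by blast
  define j' where "j' = j + m * int (Nside g)"
  have "ee g p \<le> ee g j'" "ee g (j' + 1) \<le> ee g q" using m ee_mono_le[OF assms] by (auto simp: j'_def)
  then have "cis ` {ee g j' <..< ee g (j' + 1)} \<subseteq> cis ` {ee g p <..< ee g q}" by (intro image_mono) auto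
  then show "cis ` {ee g j <..< ee g (j + 1)} \<subseteq> cis ` {ee g p <..< ee g q}"
    using ee_oo_shift[OF assms, of j m] by (simp add: j'_def)
qed

lemma ee_union: assumes "g \<ge> 2" "p < q"
  shows "(\<Union>j\<in>{p..<q}. cis ` {ee g j .. ee g (j + 1)}) = cis ` {ee g p .. ee g q}"
  using assms(2)
proof (induction q rule: int_gr_induct)
  case base
  have "{p..<p + 1} = {p}" by auto
  then show ?case by simp
next
  case (step q)
  have iv: "{p..<q + 1} = insert q {p..<q}" using step by auto
  have "ee g p \<le> ee g q" "ee g q \<le> ee g (q + 1)" using ee_mono_le[OF assms(1)] step by auto
  then have "{ee g p .. ee g (q + 1)} = {ee g p .. ee g q} \<union> {ee g q .. ee g (q + 1)}" by auto
  then show ?case using step by (simp add: iv image_Un Un_commute)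
qed



lemma sigma_parity: "odd (sigma g k) \<longleftrightarrow> odd k"
proof -
  have e: "even (int (Nside g))" by (rule N_evenI)
  show ?thesis
  proof (cases "odd k")
    case True
    then have "odd (4 * int g - k)" by auto
    then show ?thesis using True odd_mod_even[OF e, of "4 * int g - k"] by (simp add: sigma_def)
  next
    case False
    then have "even (2 - k)" by auto
    then show ?thesis using False odd_mod_even[OF e, of "2 - k"] by (simp add: sigma_def)
  qed
qed

lemma ee_odd: assumes "g \<ge> 2" "odd k"
  shows "ee g k = alpha g k - beta g" "ee g (k + 1) = alpha g k + beta g"
  using assms by (auto simp: ee_def)

lemma ee_even: assumes "g \<ge> 2" "even k"
  shows "ee g k = alpha g k - dl g + beta g" "ee g (k + 1) = alpha g k + dl g - beta g"
  using assms alpha_pred[OF assms(1), of k] alpha_succ[OF assms(1), of k] by (auto simp: ee_def)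

lemma T_image_gen: assumes "g \<ge> 2" "-pi < a - alpha g i" "a < b" "b - alpha g i < pi"
  shows "T g i ` cis ` {a<..<b} = cis ` {alpha g (sigma g i) + pi + hh (KK g) (a - alpha g i) <..<
      alpha g (sigma g i) + pi + hh (KK g) (b - alpha g i)}"
proof -
  have "T g i ` cis ` {a<..<b} = (\<lambda>x. cis (alpha g (sigma g i) + pi + hh (KK g) (x - alpha g i))) ` {a<..<b}"
    unfolding image_image
  proof (rule image_cong[OF refl])
    fix x assume "x \<in> {a<..<b}"
    then show "T g i (cis x) = cis (alpha g (sigma g i) + pi + hh (KK g) (x - alpha g i))"
      using assms by (intro T_cis) auto
  qed
  also have "\<dots> = cis ` ((\<lambda>x. (alpha g (sigma g i) + pi) + hh (KK g) (x - alpha g i)) ` {a<..<b})"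
    by (simp add: image_image)
  also have "(\<lambda>x. (alpha g (sigma g i) + pi) + hh (KK g) (x - alpha g i)) ` {a<..<b} =
     {alpha g (sigma g i) + pi + hh (KK g) (a - alpha g i) <..< alpha g (sigma g i) + pi + hh (KK g) (b - alpha g i)}"
    using assms KK_pos[OF assms(1)] by (intro hh_image) auto
  finally show ?thesis .
qed

lemma T_image_odd: assumes "g \<ge> 2" "odd i"
  shows "T g i ` cis ` {ee g i <..< ee g (i + 1)} =
         cis ` {ee g (sigma g i + 1) <..< ee g (sigma g i + int (Nside g))}"
proof -
  note b = beta_facts[OF assms(1)]
  have os: "odd (sigma g i)" using sigma_parity assms by blast
  have "T g i ` cis ` {ee g i <..< ee g (i + 1)} = cis ` {alpha g (sigma g i) + pi + hh (KK g) (- beta g) <..<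
      alpha g (sigma g i) + pi + hh (KK g) (beta g)}"
    using T_image_gen[OF assms(1), of "alpha g i - beta g" i "alpha g i + beta g"] b ee_odd[OF assms]
    by (simp add: pi_gt_zero)
  also have "alpha g (sigma g i) + pi + hh (KK g) (- beta g) = ee g (sigma g i + 1)"
    using os hh_odd[of "KK g" "beta g"] hh_beta[OF assms(1)] ee_odd[OF assms(1) os] by simp
  also have "alpha g (sigma g i) + pi + hh (KK g) (beta g) = ee g (sigma g i + int (Nside g))"
    using hh_beta[OF assms(1)] ee_odd[OF assms(1) os] ee_shift[OF assms(1), of "sigma g i" 1] by simp
  finally show ?thesis .
qed

lemma T_image_even: assumes "g \<ge> 2" "even i"
  shows "T g i ` cis ` {ee g i <..< ee g (i + 1)} =
         cis ` {ee g (sigma g i + 2) <..< ee g (sigma g i - 1 + int (Nside g))}"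
proof -
  note b = beta_facts[OF assms(1)]
  have es: "even (sigma g i)" using sigma_parity assms by blast
  have "T g i ` cis ` {ee g i <..< ee g (i + 1)} = cis ` {alpha g (sigma g i) + pi + hh (KK g) (- (dl g - beta g)) <..<
      alpha g (sigma g i) + pi + hh (KK g) (dl g - beta g)}"
    using T_image_gen[OF assms(1), of "alpha g i - dl g + beta g" i "alpha g i + dl g - beta g"] b ee_even[OF assms]
    by (simp add: pi_gt_zero)
  also have "alpha g (sigma g i) + pi + hh (KK g) (- (dl g - beta g)) = ee g (sigma g i + 2)"
  proof -
    have "ee g (sigma g i + 2) = ee g ((sigma g i + 1) + 1)" by (simp add: add.assoc)
    also have "\<dots> = alpha g (sigma g i + 1) + beta g" using es by (simp add: ee_def add.commute)
    also have "\<dots> = alpha g (sigma g i) + dl g + beta g" using alpha_succ[OF assms(1)] by simp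
    finally show ?thesis using hh_odd[of "KK g" "dl g - beta g"] hh_dl[OF assms(1)] by simp
  qed
  also have "alpha g (sigma g i) + pi + hh (KK g) (dl g - beta g) = ee g (sigma g i - 1 + int (Nside g))"
  proof -
    have "ee g (sigma g i - 1 + int (Nside g)) = ee g (sigma g i - 1) + 2 * pi"
      using ee_shift[OF assms(1), of "sigma g i - 1" 1] by simp
    also have "ee g (sigma g i - 1) = alpha g (sigma g i - 1) - beta g" using es by (simp add: ee_def)
    also have "\<dots> = alpha g (sigma g i) - dl g - beta g" using alpha_pred[OF assms(1)] by simp
    finally show ?thesis using hh_dl[OF assms(1)] by simp
  qed
  finally show ?thesis .
qed



lemma pf_bound:
  fixes E :: "nat \<Rightarrow> nat \<Rightarrow> real" and V :: "nat \<Rightarrow> real" and w :: "nat \<Rightarrow> complex"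
  assumes E0: "\<forall>i<n. \<forall>j<n. E i j \<ge> 0" and V0: "\<forall>i<n. V i > 0"
    and EV: "\<forall>i<n. (\<Sum>j<n. E i j * V j) = lam * V i"
    and w0: "\<exists>i<n. w i \<noteq> 0"
    and Ew: "\<forall>i<n. (\<Sum>j<n. complex_of_real (E i j) * w j) = \<mu> * w i"
  shows "cmod \<mu> \<le> lam"
proof -
  define \<rho> where "\<rho> i = cmod (w i) / V i" for i
  have ne: "{..<n} \<noteq> {}" using w0 by auto
  define R where "R = Max (\<rho> ` {..<n})"
  have "R \<in> \<rho> ` {..<n}" unfolding R_def by (rule Max_in) (use ne in auto)
  then obtain i0 where i0: "i0 < n" "\<rho> i0 = R" by auto
  have Rge: "\<rho> j \<le> R" if "j < n" for j using that by (auto simp: R_def)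
  obtain i1 where i1: "i1 < n" "w i1 \<noteq> 0" using w0 by auto
  have "\<rho> i1 > 0" using i1 V0 by (auto simp: \<rho>_def)
  then have Rpos: "R > 0" using Rge[OF i1(1)] by linarith
  have wj: "cmod (w j) \<le> R * V j" if "j < n" for j
    using Rge[OF that] V0 that by (auto simp: \<rho>_def divide_le_eq)
  have wi0: "cmod (w i0) = R * V i0" using i0 V0 by (auto simp: \<rho>_def field_simps)
  have "cmod \<mu> * cmod (w i0) = cmod (\<Sum>j<n. complex_of_real (E i0 j) * w j)"
    using Ew i0 by (simp add: norm_mult)
  also have "\<dots> \<le> (\<Sum>j<n. cmod (complex_of_real (E i0 j) * w j))" by (rule norm_sum)
  also have "\<dots> = (\<Sum>j<n. E i0 j * cmod (w j))"
    using E0 i0 by (intro sum.cong) (auto simp: norm_mult)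
  also have "\<dots> \<le> (\<Sum>j<n. E i0 j * (R * V j))"
    using E0 i0 wj by (intro sum_mono mult_left_mono) auto
  also have "\<dots> = R * (\<Sum>j<n. E i0 j * V j)" by (simp add: sum_distrib_left algebra_simps)
  also have "\<dots> = lam * cmod (w i0)" using EV i0 wi0 by simp
  finally have "cmod \<mu> * cmod (w i0) \<le> lam * cmod (w i0)" .
  moreover have "cmod (w i0) > 0" using wi0 Rpos V0 i0 by auto
  ultimately show ?thesis by simp
qed

lemma matrix_part:
  fixes E :: "nat \<Rightarrow> nat \<Rightarrow> real" and V :: "nat \<Rightarrow> real"
  assumes n: "n > 0" and E0: "\<forall>i<n. \<forall>j<n. E i j \<ge> 0" and V0: "\<forall>i<n. V i > 0"
    and EV: "\<forall>i<n. (\<Sum>j<n. E i j * V j) = lam * V i"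
  shows "eigenvalue (mat n n (\<lambda>(i,j). complex_of_real (E i j))) (complex_of_real lam) \<and>
    (\<forall>\<mu>. eigenvalue (mat n n (\<lambda>(i,j). complex_of_real (E i j))) \<mu> \<longrightarrow> cmod \<mu> \<le> lam)"
proof
  let ?M = "mat n n (\<lambda>(i,j). complex_of_real (E i j))"
  have mv: "(?M *\<^sub>v v) $ i = (\<Sum>j<n. complex_of_real (E i j) * v $ j)" if "i < n" "dim_vec v = n" for v i
    using that by (simp add: scalar_prod_def lessThan_atLeast0)
  define v where "v = vec n (\<lambda>j. complex_of_real (V j))"
  have "eigenvector ?M v (complex_of_real lam)"
    unfolding eigenvector_def
  proof (intro conjI)
    show "v \<in> carrier_vec (dim_row ?M)" by (simp add: v_def)
    show "v \<noteq> 0\<^sub>v (dim_row ?M)"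
    proof
      assume "v = 0\<^sub>v (dim_row ?M)"
      then have "v $ 0 = 0" using n by simp
      then have "V 0 = 0" using n by (simp add: v_def)
      then show False using n V0 by (metis less_irrefl)
    qed
    show "?M *\<^sub>v v = complex_of_real lam \<cdot>\<^sub>v v"
    proof (rule eq_vecI)
      fix i assume "i < dim_vec (complex_of_real lam \<cdot>\<^sub>v v)"
      then have i: "i < n" by (simp add: v_def)
      have "(?M *\<^sub>v v) $ i = (\<Sum>j<n. complex_of_real (E i j * V j))"
        using mv[OF i] by (simp add: v_def)
      also have "\<dots> = complex_of_real (\<Sum>j<n. E i j * V j)" by simp
      also have "\<dots> = complex_of_real lam * v $ i" using EV i by (simp add: v_def)
      finally show "(?M *\<^sub>v v) $ i = (complex_of_real lam \<cdot>\<^sub>v v) $ i" using i by (simp add: v_def)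
    qed (simp add: v_def)
  qed
  then show "eigenvalue ?M (complex_of_real lam)" by (auto simp: eigenvalue_def)
  show "\<forall>\<mu>. eigenvalue ?M \<mu> \<longrightarrow> cmod \<mu> \<le> lam"
  proof (intro allI impI)
    fix \<mu> assume "eigenvalue ?M \<mu>"
    then obtain w where w: "w \<in> carrier_vec n" "w \<noteq> 0\<^sub>v n" "?M *\<^sub>v w = \<mu> \<cdot>\<^sub>v w"
      by (auto simp: eigenvalue_def eigenvector_def)
    have dw: "dim_vec w = n" using w by auto
    have "\<exists>i<n. w $ i \<noteq> 0"
    proof (rule ccontr)
      assume "\<not> (\<exists>i<n. w $ i \<noteq> 0)"
      then have "w = 0\<^sub>v n" using dw by (intro eq_vecI) auto
      then show False using w by simp
    qed
    moreover have "\<forall>i<n. (\<Sum>j<n. complex_of_real (E i j) * w $ j) = \<mu> * w $ i"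
    proof (intro allI impI)
      fix i assume i: "i < n"
      have "(?M *\<^sub>v w) $ i = (\<mu> \<cdot>\<^sub>v w) $ i" using w by simp
      then show "(\<Sum>j<n. complex_of_real (E i j) * w $ j) = \<mu> * w $ i" using mv[OF i dw] i dw by simp
    qed
    ultimately show "cmod \<mu> \<le> lam" using pf_bound[OF E0 V0 EV, of "\<lambda>j. w $ j" \<mu>] by blast
  qed
qed

definition VV :: "real \<Rightarrow> real \<Rightarrow> int \<Rightarrow> real" where "VV X Y k = (if even k then X else Y)"

lemma sum_VV2: "(\<Sum>r<2*m. VV X Y (int r + c)) = real m * (X + Y)"
proof (induction m)
  case 0 then show ?case by simp
next
  case (Suc m)
  have "{..<2 * Suc m} = insert (2*m+1) (insert (2*m) {..<2*m})" by auto
  then have "(\<Sum>r<2*Suc m. VV X Y (int r + c)) = VV X Y (int (2*m+1) + c) + VV X Y (int (2*m) + c) + (\<Sum>r<2*m. VV X Y (int r + c))"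
    by (simp add: add.assoc)
  also have "VV X Y (int (2*m+1) + c) + VV X Y (int (2*m) + c) = X + Y"
    by (auto simp: VV_def)
  finally show ?case using Suc by (simp add: algebra_simps)
qed

lemma sum_VV2p1: fixes c :: int shows "(\<Sum>r<2*m+1. VV X Y (int r + c)) = real m * (X + Y) + VV X Y (2 * int m + c)"
  using sum_VV2 by simp

lemma sum_reindex_mod: assumes "(N::nat) > 0"
  shows "(\<Sum>j<N. G ((int j + c) mod int N)) = (\<Sum>j<N. G (int j))"
proof -
  define h where "h j = nat ((int j + c) mod int N)" for j
  have hb: "bij_betw h {..<N} {..<N}"
  proof (rule bij_betw_imageI)
    show "inj_on h {..<N}"
    proof
      fix a b assume ab: "a \<in> {..<N}" "b \<in> {..<N}" "h a = h b"
      moreover have "(int a + c) mod int N \<ge> 0" "(int b + c) mod int N \<ge> 0" using assms by simp_all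
      ultimately have "(int a + c) mod int N = (int b + c) mod int N" unfolding h_def using eq_nat_nat_iff by blast
      then have "int a mod int N = int b mod int N" by (metis add_diff_cancel_right' mod_diff_cong)
      then show "a = b" using ab by simp
    qed
    show "h ` {..<N} = {..<N}"
    proof (intro equalityI subsetI)
      fix x assume "x \<in> h ` {..<N}" then show "x \<in> {..<N}" using assms by (auto simp: h_def nat_less_iff)
    next
      fix x assume x: "x \<in> {..<N}"
      define a where "a = nat ((int x - c) mod int N)"
      have "a < N" using assms by (simp add: a_def nat_less_iff)
      moreover have "h a = x"
      proof -
        have "(int a + c) mod int N = ((int x - c) mod int N + c) mod int N" using assms by (simp add: a_def)
        also have "\<dots> = int x mod int N" by (metis diff_add_cancel mod_add_left_eq)
        also have "\<dots> = int x" using x by simp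
        finally show ?thesis by (simp add: h_def)
      qed
      ultimately show "x \<in> h ` {..<N}" by auto
    qed
  qed
  have "(\<Sum>j<N. G ((int j + c) mod int N)) = (\<Sum>j<N. G (int (h j)))"
    using assms by (intro sum.cong) (auto simp: h_def)
  also have "\<dots> = (\<Sum>j<N. G (int j))"
    using sum.reindex_bij_betw[OF hb, of "\<lambda>j. G (int j)"] by simp
  finally show ?thesis .
qed



lemma T_inj: assumes "g \<ge> 2" "cmod x = 1" "cmod y = 1" "T g k x = T g k y" shows "x = y"
proof -
  define c where "c = cis (pi - alpha g k)"
  define t where "t = complex_of_real (tt g)"
  have t: "0 < tt g" "tt g < 1" using tt_bounds[OF assms(1)] by auto
  define a where "a = c * x"
  define b where "b = c * y"
  have na: "cmod a = 1" "cmod b = 1" using assms by (auto simp: a_def b_def c_def norm_mult)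
  have da: "1 + t * a \<noteq> 0"
  proof
    assume "1 + t * a = 0"
    then have "t * a = -1" by (simp add: add_eq_0_iff)
    then have "cmod (t * a) = 1" by simp
    then show False using na t by (simp add: t_def norm_mult)
  qed
  have db: "1 + t * b \<noteq> 0"
  proof
    assume "1 + t * b = 0"
    then have "t * b = -1" by (simp add: add_eq_0_iff)
    then have "cmod (t * b) = 1" by simp
    then show False using na t by (simp add: t_def norm_mult)
  qed
  have "mobH (tt g) a = mobH (tt g) b"
    using assms(4) by (simp add: T_def a_def b_def c_def tt_def)
  then have "(a + t) / (1 + t * a) = (b + t) / (1 + t * b)" by (simp add: mobH_def t_def)
  then have "(a + t) * (1 + t * b) = (b + t) * (1 + t * a)" using da db by (simp add: frac_eq_eq)
  then have "(a - b) * (1 - t * t) = 0" by (simp add: algebra_simps)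
  moreover have "1 - t * t \<noteq> 0"
  proof
    assume "1 - t * t = 0"
    then have "tt g * tt g = 1" unfolding t_def by (metis eq_iff_diff_eq_0 of_real_1 of_real_eq_iff of_real_mult)
    moreover have "tt g * tt g < 1 * 1" using t by (intro mult_strict_mono) auto
    ultimately show False by simp
  qed
  ultimately have "a - b = 0" by (simp only: mult_eq_0_iff) blast
  then show ?thesis by (simp add: a_def b_def c_def)
qed

lemma T_cont: assumes "g \<ge> 2" shows "continuous_on {z. cmod z = 1} (T g k)"
proof -
  have t: "0 < tt g" "tt g < 1" using tt_bounds[OF assms(1)] by auto
  have nz: "1 + complex_of_real (cos (beta g)) * (cis (pi - alpha g k) * z) \<noteq> 0" if "cmod z = 1" for z
  proof
    assume "1 + complex_of_real (cos (beta g)) * (cis (pi - alpha g k) * z) = 0"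
    then have "complex_of_real (cos (beta g)) * (cis (pi - alpha g k) * z) = -1" by (simp add: add_eq_0_iff)
    then have "cmod (complex_of_real (cos (beta g)) * (cis (pi - alpha g k) * z)) = 1" by simp
    then show False using that t by (simp add: tt_def norm_mult)
  qed
  define c where "c = cis (pi - alpha g k)"
  define t where "t = complex_of_real (cos (beta g))"
  have c1: "continuous_on {z. cmod z = 1} (\<lambda>z. c * z + t)" by (intro continuous_on_add continuous_on_mult continuous_on_const continuous_on_id)
  have c2: "continuous_on {z. cmod z = 1} (\<lambda>z. 1 + t * (c * z))" by (intro continuous_on_add continuous_on_mult continuous_on_const continuous_on_id)
  have c3: "continuous_on {z. cmod z = 1} (\<lambda>z. (c * z + t) / (1 + t * (c * z)))"
    by (rule continuous_on_divide[OF c1 c2]) (use nz in \<open>auto simp: c_def t_def\<close>)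
  have "continuous_on {z. cmod z = 1} (\<lambda>z. cis (alpha g (sigma g k)) * ((c * z + t) / (1 + t * (c * z))))"
    by (intro continuous_on_mult continuous_on_const c3)
  moreover have "T g k = (\<lambda>z. cis (alpha g (sigma g k)) * ((c * z + t) / (1 + t * (c * z))))"
    by (simp add: T_def mobH_def c_def t_def fun_eq_iff)
  ultimately show ?thesis by simp
qed

definition pp :: "nat \<Rightarrow> int \<Rightarrow> int" where
  "pp g k = (if odd k then sigma g k + 1 else sigma g k + 2)"
definition LL :: "nat \<Rightarrow> int \<Rightarrow> int" where
  "LL g k = (if odd k then int (Nside g) - 1 else int (Nside g) - 3)"

lemma LL_bounds: assumes "g \<ge> 2" shows "0 < LL g k" "LL g k \<le> int (Nside g)"
  using N_ge[OF assms] by (auto simp: LL_def)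

lemma pp_even: "even (pp g k)"
  using sigma_parity[of g k] by (auto simp: pp_def)

lemma fbar_eq: assumes "g \<ge> 2" "1 \<le> i" "i \<le> int (Nside g)" "x \<in> cis ` {ee g i <..< ee g (i + 1)}"
  shows "fbar g (Abar_PQ g) x = T g i x"
proof -
  have N0: "int (Nside g) > 0" using N_ge[OF assms(1)] by simp
  have "(THE k. k \<in> {1..int (Nside g)} \<and> x \<in> arc_co (Abar_PQ g k) (Abar_PQ g (k + 1))) = i"
  proof (rule the_equality)
    show "i \<in> {1..int (Nside g)} \<and> x \<in> arc_co (Abar_PQ g i) (Abar_PQ g (i + 1))"
      using assms unfolding arcco_ee[OF assms(1)] by auto
  next
    fix k assume k: "k \<in> {1..int (Nside g)} \<and> x \<in> arc_co (Abar_PQ g k) (Abar_PQ g (k + 1))"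
    then obtain b where b: "ee g k \<le> b" "b < ee g (k + 1)" "x = cis b"
      unfolding arcco_ee[OF assms(1)] by auto
    obtain a where a: "ee g i < a" "a < ee g (i + 1)" "x = cis a" using assms(4) by auto
    obtain m where "i = k + m * int (Nside g)" using ee_cis_overlap[OF assms(1) a(1,2) b(1,2)] a b by metis
    moreover then have "m = 0" using idx_unique[OF N0, of i k m] assms k by auto
    ultimately show "k = i" by simp
  qed
  then show ?thesis by (simp add: fbar_def)
qed

lemma fimg: assumes "g \<ge> 2" "1 \<le> i" "i \<le> int (Nside g)"
  shows "fbar g (Abar_PQ g) ` circ_int (Ipart g i) = cis ` {ee g (pp g i) <..< ee g (pp g i + LL g i)}"
proof -
  have "fbar g (Abar_PQ g) ` circ_int (Ipart g i) = T g i ` cis ` {ee g i <..< ee g (i + 1)}"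
    unfolding int_Ipart[OF assms(1)] using fbar_eq[OF assms] by (intro image_cong) auto
  also have "\<dots> = cis ` {ee g (pp g i) <..< ee g (pp g i + LL g i)}"
  proof (cases "odd i")
    case True
    have e1: "pp g i + LL g i = sigma g i + int (Nside g)" using True by (simp add: pp_def LL_def)
    have e2: "pp g i = sigma g i + 1" using True by (simp add: pp_def)
    show ?thesis unfolding e1 unfolding e2 by (rule T_image_odd[OF assms(1) True])
  next
    case False
    have e1: "pp g i + LL g i = sigma g i - 1 + int (Nside g)" using False by (simp add: pp_def LL_def)
    have e2: "pp g i = sigma g i + 2" using False by (simp add: pp_def)
    have ev: "even i" using False by simp
    show ?thesis unfolding e1 unfolding e2 by (rule T_image_even[OF assms(1) ev])
  qed
  finally show ?thesis .
qed

lemma mod_window: fixes N p L j :: int assumes "0 < L" "L \<le> N"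
  shows "(\<exists>m. p \<le> j + m * N \<and> j + m * N < p + L) \<longleftrightarrow> (j - p) mod N < L"
proof
  assume "\<exists>m. p \<le> j + m * N \<and> j + m * N < p + L"
  then obtain m where m: "p \<le> j + m * N" "j + m * N < p + L" by blast
  have "(j - p) mod N = ((j + m * N - p) + (- m) * N) mod N" by (simp add: algebra_simps)
  also have "\<dots> = (j + m * N - p) mod N" by (rule mod_mult_self1)
  also have "\<dots> = j + m * N - p" by (rule mod_pos_pos_trivial) (use m assms in linarith)+
  finally show "(j - p) mod N < L" using m by simp
next
  assume h: "(j - p) mod N < L"
  have N0: "N > 0" using assms by simp
  have "j - p = (j - p) mod N + N * ((j - p) div N)" by simp
  then have e: "j + (- ((j - p) div N)) * N = p + (j - p) mod N" by (simp add: algebra_simps)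
  have "(j - p) mod N \<ge> 0" using N0 by simp
  then show "\<exists>m. p \<le> j + m * N \<and> j + m * N < p + L" using e h by (intro exI[of _ "- ((j - p) div N)"] conjI; linarith)
qed

lemma entry: assumes "g \<ge> 2" "1 \<le> i" "i \<le> int (Nside g)"
  shows "circ_int (Ipart g j) \<subseteq> fbar g (Abar_PQ g) ` circ_int (Ipart g i) \<longleftrightarrow>
    (j - pp g i) mod int (Nside g) < LL g i"
proof -
  have "circ_int (Ipart g j) \<subseteq> fbar g (Abar_PQ g) ` circ_int (Ipart g i) \<longleftrightarrow>
    cis ` {ee g j <..< ee g (j + 1)} \<subseteq> cis ` {ee g (pp g i) <..< ee g (pp g i + LL g i)}"
    unfolding fimg[OF assms] by (simp only: int_Ipart[OF assms(1)])
  also have "\<dots> \<longleftrightarrow> (\<exists>m. pp g i \<le> j + m * int (Nside g) \<and> j + m * int (Nside g) < pp g i + LL g i)"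
    by (rule ee_contain[OF assms(1)])
  also have "\<dots> \<longleftrightarrow> (j - pp g i) mod int (Nside g) < LL g i"
    by (rule mod_window[OF LL_bounds[OF assms(1)]])
  finally show ?thesis .
qed



lemma markov: assumes "g \<ge> 2"
  shows "markov_partition (fbar g (Abar_PQ g)) (Ipart g) {1..int (Nside g)}"
proof -
  define N where "N = int (Nside g)"
  have N0: "N > 0" using N_ge[OF assms] by (simp add: N_def)
  have cover: "(\<Union>k\<in>{1..N}. Ipart g k) = circle"
  proof -
    have "{1..N} = {1..<N + 1}" by auto
    then have "(\<Union>k\<in>{1..N}. Ipart g k) = (\<Union>k\<in>{1..<N + 1}. cis ` {ee g k .. ee g (k + 1)})"
      using Ipart_ee[OF assms] by simp
    also have "\<dots> = cis ` {ee g 1 .. ee g (N + 1)}" using N0 by (intro ee_union[OF assms]) auto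
    also have "ee g (N + 1) = ee g 1 + 2 * pi" using ee_shift[OF assms, of 1 1] by (simp add: N_def add.commute)
    also have "cis ` {ee g 1 .. ee g 1 + 2 * pi} = circle" by (rule circle_eq[symmetric])
    finally show ?thesis .
  qed
  have disj: "circ_int (Ipart g i) \<inter> circ_int (Ipart g j) = {}"
    if "i \<in> {1..N}" "j \<in> {1..N}" "i \<noteq> j" for i j
  proof (rule ccontr)
    assume "circ_int (Ipart g i) \<inter> circ_int (Ipart g j) \<noteq> {}"
    then obtain a b where ab: "ee g i < a" "a < ee g (i + 1)" "ee g j < b" "b < ee g (j + 1)" "cis a = cis b"
      unfolding int_Ipart[OF assms] by auto
    obtain m where "i = j + m * N" using ee_cis_overlap[OF assms ab(1,2), of j b] ab by (auto simp: N_def)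
    moreover then have "m = 0" using idx_unique[OF N0, of i j m] that by auto
    ultimately show False using that by simp
  qed
  have per: "Ipart g i = cl (circ_int (Ipart g i)) \<and>
        inj_on (fbar g (Abar_PQ g)) (circ_int (Ipart g i)) \<and>
        continuous_on (circ_int (Ipart g i)) (fbar g (Abar_PQ g)) \<and>
        cl (fbar g (Abar_PQ g) ` circ_int (Ipart g i)) =
          \<Union>{Ipart g j | j. j \<in> {1..N} \<and> circ_int (Ipart g j) \<subseteq> fbar g (Abar_PQ g) ` circ_int (Ipart g i)}"
    if i: "i \<in> {1..N}" for i
  proof (intro conjI)
    have i1: "1 \<le> i" "i \<le> int (Nside g)" using i by (auto simp: N_def)
    have feq: "\<And>x. x \<in> circ_int (Ipart g i) \<Longrightarrow> fbar g (Abar_PQ g) x = T g i x"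
      unfolding int_Ipart[OF assms] using fbar_eq[OF assms i1] by blast
    have unit: "circ_int (Ipart g i) \<subseteq> {z. cmod z = 1}" unfolding int_Ipart[OF assms] by auto
    show "Ipart g i = cl (circ_int (Ipart g i))" using cl_int_Ipart[OF assms] by simp
    show "inj_on (fbar g (Abar_PQ g)) (circ_int (Ipart g i))"
    proof (subst inj_on_cong[OF feq])
      show "inj_on (T g i) (circ_int (Ipart g i))"
        using T_inj[OF assms] unit by (auto simp: inj_on_def)
    qed simp
    show "continuous_on (circ_int (Ipart g i)) (fbar g (Abar_PQ g))"
    proof -
      have "continuous_on (circ_int (Ipart g i)) (T g i)"
        using continuous_on_subset[OF T_cont[OF assms] unit] .
      moreover have "continuous_on (circ_int (Ipart g i)) (fbar g (Abar_PQ g)) = continuous_on (circ_int (Ipart g i)) (T g i)"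
        by (rule continuous_on_cong[OF refl feq])
      ultimately show ?thesis by (simp only:)
    qed
    define p where "p = pp g i"
    define q where "q = pp g i + LL g i"
    have pq: "p < q" using LL_bounds[OF assms, of i] by (simp add: p_def q_def)
    have cond: "circ_int (Ipart g j) \<subseteq> fbar g (Abar_PQ g) ` circ_int (Ipart g i) \<longleftrightarrow>
        (\<exists>m. p \<le> j + m * N \<and> j + m * N < q)" for j
    proof -
      have "circ_int (Ipart g j) \<subseteq> fbar g (Abar_PQ g) ` circ_int (Ipart g i) \<longleftrightarrow>
        cis ` {ee g j <..< ee g (j + 1)} \<subseteq> cis ` {ee g p <..< ee g q}"
        unfolding fimg[OF assms i1] p_def q_def by (simp only: int_Ipart[OF assms])
      also have "\<dots> \<longleftrightarrow> (\<exists>m. p \<le> j + m * N \<and> j + m * N < q)"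
        unfolding N_def by (rule ee_contain[OF assms])
      finally show ?thesis .
    qed
    have "cl (fbar g (Abar_PQ g) ` circ_int (Ipart g i)) = cis ` {ee g p .. ee g q}"
      unfolding fimg[OF assms i1] q_def[symmetric] unfolding p_def[symmetric]
      using ee_mono[OF assms pq] by (intro cl_co)
    also have "\<dots> = \<Union>{Ipart g j | j. j \<in> {1..N} \<and> circ_int (Ipart g j) \<subseteq> fbar g (Abar_PQ g) ` circ_int (Ipart g i)}"
    proof (intro equalityI subsetI)
      fix z assume "z \<in> cis ` {ee g p .. ee g q}"
      then obtain j' where j': "j' \<in> {p..<q}" "z \<in> cis ` {ee g j' .. ee g (j' + 1)}"
        using ee_union[OF assms pq] by blast
      obtain j m where jm: "1 \<le> j" "j \<le> N" "j' = j + m * N" using normalize_idx[OF N0] by blast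
      have "Ipart g j = cis ` {ee g j' .. ee g (j' + 1)}"
        using ee_cc_shift[OF assms, of j m] Ipart_ee[OF assms, of j] jm by (simp add: N_def)
      then have zin: "z \<in> Ipart g j" using j' by simp
      have "circ_int (Ipart g j) \<subseteq> fbar g (Abar_PQ g) ` circ_int (Ipart g i)"
        using cond jm j' by auto
      then have "Ipart g j \<in> {Ipart g j | j. j \<in> {1..N} \<and> circ_int (Ipart g j) \<subseteq> fbar g (Abar_PQ g) ` circ_int (Ipart g i)}"
        using jm by auto
      then show "z \<in> \<Union>{Ipart g j | j. j \<in> {1..N} \<and> circ_int (Ipart g j) \<subseteq> fbar g (Abar_PQ g) ` circ_int (Ipart g i)}"
        using zin by blast
    next
      fix z assume "z \<in> \<Union>{Ipart g j | j. j \<in> {1..N} \<and> circ_int (Ipart g j) \<subseteq> fbar g (Abar_PQ g) ` circ_int (Ipart g i)}"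
      then obtain j where j: "z \<in> Ipart g j" "circ_int (Ipart g j) \<subseteq> fbar g (Abar_PQ g) ` circ_int (Ipart g i)"
        by auto
      then obtain m where m: "p \<le> j + m * N" "j + m * N < q" using cond by blast
      have "Ipart g j = cis ` {ee g (j + m * N) .. ee g (j + m * N + 1)}"
        using ee_cc_shift[OF assms, of j m] Ipart_ee[OF assms, of j] by (simp add: N_def)
      also have "\<dots> \<subseteq> cis ` {ee g p .. ee g q}"
        using m ee_mono_le[OF assms, of p "j + m * N"] ee_mono_le[OF assms, of "j + m * N + 1" q]
        by (intro image_mono) auto
      finally show "z \<in> cis ` {ee g p .. ee g q}" using j by auto
    qed
    finally show "cl (fbar g (Abar_PQ g) ` circ_int (Ipart g i)) =
          \<Union>{Ipart g j | j. j \<in> {1..N} \<and> circ_int (Ipart g j) \<subseteq> fbar g (Abar_PQ g) ` circ_int (Ipart g i)}" .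
  qed
  show ?thesis unfolding markov_partition_def N_def[symmetric]
    using cover disj per by auto
qed



definition EE :: "nat \<Rightarrow> nat \<Rightarrow> nat \<Rightarrow> real" where
  "EE g i j = (if (int j + 1 - pp g (int i + 1)) mod int (Nside g) < LL g (int i + 1) then 1 else 0)"

lemma row_sum: assumes "g \<ge> 2" "i < Nside g"
  shows "(\<Sum>j<Nside g. EE g i j * VV X Y (int j)) =
    real (if even i then 4 * g - 3 else 4 * g - 4) * (X + Y) + Y"
proof -
  define k where "k = int i + 1"
  define p where "p = pp g k"
  define L where "L = LL g k"
  define c where "c = 1 - p"
  define Nn where "Nn = Nside g"
  have N0: "Nn > 0" using N_ge[OF assms(1)] by (simp add: Nn_def)
  have L: "0 < L" "L \<le> int Nn" using LL_bounds[OF assms(1)] by (auto simp: L_def Nn_def)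
  define G where "G r = (if r < L then 1 else 0) * VV X Y (r - c)" for r
  have s1: "EE g i j * VV X Y (int j) = G ((int j + c) mod int Nn)" for j
  proof -
    have par: "odd ((int j + c) mod int Nn) \<longleftrightarrow> odd (int j + c)"
      using odd_mod_even[OF N_evenI, of "int j + c" g] by (simp add: Nn_def)
    have "even ((int j + c) mod int Nn - c) \<longleftrightarrow> even (int j)"
      using par by (simp add: even_diff even_add) blast
    then have "VV X Y (int j) = VV X Y ((int j + c) mod int Nn - c)" by (simp add: VV_def)
    moreover have e: "(int j + 1 - pp g (int i + 1)) mod int (Nside g) = (int j + c) mod int Nn"
      by (simp add: c_def p_def k_def Nn_def algebra_simps)
    ultimately show ?thesis unfolding EE_def e by (simp add: G_def L_def k_def)
  qed
  have "(\<Sum>j<Nside g. EE g i j * VV X Y (int j)) = (\<Sum>j<Nn. G ((int j + c) mod int Nn))"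
    using s1 by (simp add: Nn_def)
  also have "\<dots> = (\<Sum>j<Nn. G (int j))" by (rule sum_reindex_mod[OF N0])
  also have "\<dots> = (\<Sum>j<Nn. if j \<in> {..<nat L} then VV X Y (int j + (p - 1)) else 0)"
  proof (rule sum.cong[OF refl])
    fix j assume "j \<in> {..<Nn}"
    have "int j < L \<longleftrightarrow> j < nat L" using L by auto
    moreover have e: "int j - c = int j + (p - 1)" by (simp add: c_def)
    ultimately show "G (int j) = (if j \<in> {..<nat L} then VV X Y (int j + (p - 1)) else 0)"
      unfolding G_def e by simp
  qed
  also have "\<dots> = (\<Sum>j\<in>{..<Nn} \<inter> {..<nat L}. VV X Y (int j + (p - 1)))"
    by (rule sum.inter_restrict[symmetric]) simp
  also have "{..<Nn} \<inter> {..<nat L} = {..<nat L}" using L by auto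
  finally have S: "(\<Sum>j<Nside g. EE g i j * VV X Y (int j)) = (\<Sum>j<nat L. VV X Y (int j + (p - 1)))" .
  define m where "m = (if even i then 4 * g - 3 else 4 * g - 4)"
  have nL: "nat L = 2 * m + 1"
  proof (cases "even i")
    case True
    then have "odd k" by (simp add: k_def)
    then show ?thesis using True assms(1) by (simp add: L_def LL_def m_def Nside_def)
  next
    case False
    then have "even k" by (simp add: k_def)
    then show ?thesis using False assms(1) by (simp add: L_def LL_def m_def Nside_def)
  qed
  have "VV X Y (2 * int m + (p - 1)) = Y"
    using pp_even[of g k] by (simp add: VV_def p_def)
  then show ?thesis unfolding S nL sum_VV2p1 m_def by simp
qed

theorem mainTheorem5:
  fixes g :: nat
  assumes "g \<ge> 2"
  shows "markov_partition (fbar g (Abar_PQ g)) (Ipart g) {1..int (Nside g)} \<and>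
         (let M = trans_mat (fbar g (Abar_PQ g)) (Ipart g) (Nside g);
              lam = 4 * real g - 3 + sqrt ((4 * real g - 3)\<^sup>2 - 1)
          in eigenvalue M (complex_of_real lam) \<and>
             (\<forall>\<mu>. eigenvalue M \<mu> \<longrightarrow> cmod \<mu> \<le> lam))"
proof -
  define X where "X = 4 * real g - 2"
  define Y where "Y = sqrt ((4 * real g - 3)\<^sup>2 - 1)"
  define lam where "lam = 4 * real g - 3 + Y"
  have g2: "real g \<ge> 2" using assms by simp
  have arg: "(4 * real g - 3)\<^sup>2 - 1 > 0"
  proof -
    have "4 * real g - 3 \<ge> 5" using g2 by simp
    then have "(4 * real g - 3)\<^sup>2 \<ge> 5\<^sup>2" by (intro power_mono) auto
    then show ?thesis by simp
  qed
  have Ypos: "Y > 0" using arg by (simp add: Y_def)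
  have Y2: "Y * Y = (4 * real g - 3)\<^sup>2 - 1" using arg by (simp add: Y_def)
  have Xpos: "X > 0" using g2 by (simp add: X_def)
  have M: "trans_mat (fbar g (Abar_PQ g)) (Ipart g) (Nside g) =
      mat (Nside g) (Nside g) (\<lambda>(i, j). complex_of_real (EE g i j))"
  proof (rule eq_matI)
    fix i j assume ij: "i < dim_row (mat (Nside g) (Nside g) (\<lambda>(i, j). complex_of_real (EE g i j)))"
      "j < dim_col (mat (Nside g) (Nside g) (\<lambda>(i, j). complex_of_real (EE g i j)))"
    then have ij': "i < Nside g" "j < Nside g" by auto
    have "circ_int (Ipart g (int j + 1)) \<subseteq> fbar g (Abar_PQ g) ` circ_int (Ipart g (int i + 1)) \<longleftrightarrow>
      (int j + 1 - pp g (int i + 1)) mod int (Nside g) < LL g (int i + 1)"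
      using ij' by (intro entry[OF assms]) auto
    then show "trans_mat (fbar g (Abar_PQ g)) (Ipart g) (Nside g) $$ (i, j) =
        mat (Nside g) (Nside g) (\<lambda>(i, j). complex_of_real (EE g i j)) $$ (i, j)"
      using ij' by (simp add: trans_mat_def EE_def)
  qed (simp_all add: trans_mat_def)
  have rows: "\<forall>i<Nside g. (\<Sum>j<Nside g. EE g i j * VV X Y (int j)) = lam * VV X Y (int i)"
  proof (intro allI impI)
    fix i assume i: "i < Nside g"
    have g1: "4 * g \<ge> 4" using assms by simp
    show "(\<Sum>j<Nside g. EE g i j * VV X Y (int j)) = lam * VV X Y (int i)"
    proof (cases "even i")
      case True
      have "real (4 * g - 3) = 4 * real g - 3" using g1 by (simp add: of_nat_diff)
      then show ?thesis unfolding row_sum[OF assms i] using True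
        by (simp add: VV_def lam_def X_def algebra_simps)
    next
      case False
      have "real (4 * g - 4) = 4 * real g - 4" using g1 by (simp add: of_nat_diff)
      moreover have "lam * Y = (4 * real g - 3) * Y + Y * Y" by (simp add: lam_def algebra_simps)
      ultimately show ?thesis unfolding row_sum[OF assms i] using False Y2
        by (simp add: VV_def X_def algebra_simps power2_eq_square)
    qed
  qed
  have "eigenvalue (mat (Nside g) (Nside g) (\<lambda>(i,j). complex_of_real (EE g i j))) (complex_of_real lam) \<and>
    (\<forall>\<mu>. eigenvalue (mat (Nside g) (Nside g) (\<lambda>(i,j). complex_of_real (EE g i j))) \<mu> \<longrightarrow> cmod \<mu> \<le> lam)"
  proof (rule matrix_part)
    show "Nside g > 0" using N_ge[OF assms] by simp
    show "\<forall>i<Nside g. \<forall>j<Nside g. EE g i j \<ge> 0" by (simp add: EE_def)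
    show "\<forall>i<Nside g. VV X Y (int i) > 0" using Xpos Ypos by (simp add: VV_def)
    show "\<forall>i<Nside g. (\<Sum>j<Nside g. EE g i j * VV X Y (int j)) = lam * VV X Y (int i)" by (rule rows)
  qed
  then show ?thesis using markov[OF assms] unfolding M Let_def lam_def Y_def by simp
qed

end
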